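(* In the setting described in the context, let $$X=W^{1/2}R^T\big(RWR^TL_{e,s}^\tau RWR^T\big)^{-1}RW^{1/2},\qquad X_1=W^{-1/2}R^\dagger(L_{e,s}^\tau)^{-1}(R^\dagger)^TW^{-1/2},$$ where $R^\dagger$ is the Moore–Penrose pseudoinverse of $R$. Then $\lambda_{\max}(X_1)\ge\lambda_{\max}(X)$.
   Context: Let $\mathcal G$ be an undirected, connected graph without self-loops, with node set $\{1,\dots,n\}$ ($n\ge2$) and edge set $\mathcal E$, $m=|\mathcal E|$. Give each edge an arbitrary orientation; the incidence matrix $D\in\mathbb R^{n\times m}$ has $D_{il}=1$ if node $i$ is the initial node of edge $l$, $-1$ if it is the terminal node, and $0$ otherwise. Fix a spanning tree $\mathcal G_\tau$ and order the edges so the first $n-1$ are tree edges; write $D=[D_\tau\ D_c]$ with $D_\tau\in\mathbb R^{n\times(n-1)}$. Set $T_\tau^c=(D_\tau^TD_\tau)^{-1}D_\tau^TD_c$ and $R=[I_{n-1}\ T_\tau^c]\in\mathbb R^{(n-1)\times m}$. Let $W=\mathrm{diag}(w_1,\dots,w_m)$, $w_l>0$, and $E=\mathrm{diag}(\epsilon_1,\dots,\epsilon_n)$, $\epsilon_i>0$; powers of these diagonal matrices are taken entrywise. Define $L_{e,s}^\tau=D_\tau^TE^{-1}D_\tau$. $\lambda_{\max}$ denotes the largest eigenvalue of a symmetric matrix. *)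

theory Defs
  imports "Jordan_Normal_Form.Matrix" "Jordan_Normal_Form.Char_Poly"
begin

(* Nodes are 0..<n (the paper's node i corresponds to i-1).
   An oriented edge list es :: (nat * nat) list; edge l goes from fst (es!l) (initial)
   to snd (es!l) (terminal). *)

definition adj_rel :: "(nat \<times> nat) list \<Rightarrow> (nat \<times> nat) set" where
  "adj_rel es = set es \<union> (set es)\<inverse>"

definition graph_connected :: "nat \<Rightarrow> (nat \<times> nat) list \<Rightarrow> bool" where
  "graph_connected n es = (\<forall>i<n. \<forall>j<n. (i, j) \<in> (adj_rel es)\<^sup>*)"

definition valid_graph :: "nat \<Rightarrow> (nat \<times> nat) list \<Rightarrow> bool" where
  "valid_graph n es = (\<forall>e\<in>set es. fst e < n \<and> snd e < n \<and> fst e \<noteq> snd e)"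

(* the first n-1 edges form a spanning tree: they are n-1 edges of the graph connecting
   all n nodes (hence, necessarily, acyclic) *)
definition first_edges_spanning_tree :: "nat \<Rightarrow> (nat \<times> nat) list \<Rightarrow> bool" where
  "first_edges_spanning_tree n es = (n - 1 \<le> length es \<and>
      graph_connected n (take (n - 1) es)
      \<and> (\<forall>e\<in>set (take (n - 1) es). fst e < n \<and> snd e < n))"

definition incidence_mat :: "nat \<Rightarrow> (nat \<times> nat) list \<Rightarrow> real mat" where
  "incidence_mat n es = mat n (length es) (\<lambda>(i, l).
      if fst (es ! l) = i then 1 else if snd (es ! l) = i then -1 else 0)"

definition D_tree :: "nat \<Rightarrow> (nat \<times> nat) list \<Rightarrow> real mat" where
  "D_tree n es = mat n (n - 1) (\<lambda>(i, l). incidence_mat n es $$ (i, l))"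

definition D_cot :: "nat \<Rightarrow> (nat \<times> nat) list \<Rightarrow> real mat" where
  "D_cot n es = mat n (length es - (n - 1)) (\<lambda>(i, l). incidence_mat n es $$ (i, l + (n - 1)))"

definition inv_mat :: "real mat \<Rightarrow> real mat" where
  "inv_mat A = (THE B. B \<in> carrier_mat (dim_row A) (dim_row A) \<and>
      A * B = 1\<^sub>m (dim_row A) \<and> B * A = 1\<^sub>m (dim_row A))"

definition pinv_mat :: "real mat \<Rightarrow> real mat" where
  "pinv_mat A = (THE B. B \<in> carrier_mat (dim_col A) (dim_row A) \<and>
      A * B * A = A \<and> B * A * B = B \<and>
      (A * B)\<^sup>T = A * B \<and> (B * A)\<^sup>T = B * A)"

definition T_tc :: "nat \<Rightarrow> (nat \<times> nat) list \<Rightarrow> real mat" where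
  "T_tc n es = inv_mat ((D_tree n es)\<^sup>T * D_tree n es) * (D_tree n es)\<^sup>T * D_cot n es"

definition R_mat :: "nat \<Rightarrow> (nat \<times> nat) list \<Rightarrow> real mat" where
  "R_mat n es = mat (n - 1) (length es) (\<lambda>(i, j).
      if j < n - 1 then (if i = j then 1 else 0) else T_tc n es $$ (i, j - (n - 1)))"

definition diag_of :: "nat \<Rightarrow> (nat \<Rightarrow> real) \<Rightarrow> real mat" where
  "diag_of k d = mat k k (\<lambda>(i, j). if i = j then d i else 0)"

definition L_es_tau :: "nat \<Rightarrow> (nat \<times> nat) list \<Rightarrow> (nat \<Rightarrow> real) \<Rightarrow> real mat" where
  "L_es_tau n es eps = (D_tree n es)\<^sup>T * diag_of n (\<lambda>i. 1 / eps i) * D_tree n es"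

definition lambda_max :: "real mat \<Rightarrow> real" where
  "lambda_max A = Max {k. eigenvalue A k}"

end

theory Submission
  imports Defs "HOL-Analysis.Function_Topology"
begin

lemma compact_cube: "compact (PiE UNIV (\<lambda>_::nat. {-1..1::real}))"
proof -
  have "compactin (product_topology (\<lambda>_. euclidean) UNIV) (PiE UNIV (\<lambda>_::nat. {-1..1::real}))"
    by (subst compactin_PiE) auto
  then show ?thesis by (simp add: euclidean_product_topology)
qed

definition qf :: "real mat \<Rightarrow> nat \<Rightarrow> (nat \<Rightarrow> real) \<Rightarrow> real" where
  "qf S k f = (\<Sum>i<k. \<Sum>j<k. f i * S $$ (i,j) * f j)"

definition bf :: "real mat \<Rightarrow> nat \<Rightarrow> (nat \<Rightarrow> real) \<Rightarrow> (nat \<Rightarrow> real) \<Rightarrow> real" where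
  "bf S k f g = (\<Sum>i<k. \<Sum>j<k. f i * S $$ (i,j) * g j)"

lemma qf_vec: assumes "S \<in> carrier_mat k k" "x \<in> carrier_vec k"
  shows "x \<bullet> (S *\<^sub>v x) = qf S k (\<lambda>i. x $ i)"
  using assms unfolding qf_def scalar_prod_def mult_mat_vec_def row_def
  by (auto simp: atLeast0LessThan sum_distrib_left algebra_simps intro!: sum.cong)

lemma sp_self: "(x :: real vec) \<in> carrier_vec k \<Longrightarrow> x \<bullet> x = (\<Sum>i<k. (x $ i)^2)"
  unfolding scalar_prod_def by (auto simp: atLeast0LessThan intro!: sum.cong) (metis power2_eq_square)

lemma qf_cong: "(\<And>i. i < k \<Longrightarrow> f i = g i) \<Longrightarrow> qf S k f = qf S k g"
  unfolding qf_def by (auto intro!: sum.cong)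

lemma qf_scale: "qf S k (\<lambda>i. c * f i) = c^2 * qf S k f"
  unfolding qf_def by (simp add: sum_distrib_left power2_eq_square algebra_simps)

lemma qf_add: assumes sym: "\<And>i j. i < k \<Longrightarrow> j < k \<Longrightarrow> S $$ (i,j) = S $$ (j,i)"
  shows "qf S k (\<lambda>i. f i + t * g i) = qf S k f + 2 * t * bf S k g f + t^2 * qf S k g"
proof -
  have sw: "bf S k f g = bf S k g f"
    unfolding bf_def by (subst sum.swap) (auto intro!: sum.cong simp: sym)
  have "qf S k (\<lambda>i. f i + t * g i) = qf S k f + t * bf S k f g + t * bf S k g f + t^2 * qf S k g"
    unfolding qf_def bf_def
    by (simp add: sum.distrib sum_distrib_left power2_eq_square algebra_simps)
  then show ?thesis using sw by simp
qed

lemma continuous_qf: "continuous_on A (qf S k)"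
  unfolding qf_def
  by (intro continuous_intros continuous_on_subset[OF continuous_on_product_coordinates]) auto

lemma rayleigh_exists:
  fixes S :: "real mat"
  assumes S: "S \<in> carrier_mat k k" and sym: "S\<^sup>T = S" and k: "k > 0"
  shows "\<exists>\<mu>. eigenvalue S \<mu> \<and> (\<forall>x\<in>carrier_vec k. x \<bullet> (S *\<^sub>v x) \<le> \<mu> * (x \<bullet> x))"
proof -
  have symS: "\<And>i j. i < k \<Longrightarrow> j < k \<Longrightarrow> S $$ (i,j) = S $$ (j,i)"
    using sym S by (metis carrier_matD index_transpose_mat(1))
  define K where "K = PiE UNIV (\<lambda>_::nat. {-1..1::real}) \<inter> {f. (\<Sum>i<k. (f i)^2) = 1}"
  have cl: "closed {f::nat\<Rightarrow>real. (\<Sum>i<k. (f i)^2) = 1}"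
    by (intro closed_Collect_eq continuous_intros continuous_on_subset[OF continuous_on_product_coordinates]) auto
  have cK: "compact K" unfolding K_def by (rule compact_Int_closed[OF compact_cube cl])
  have neK: "K \<noteq> {}"
  proof -
    have e: "(\<Sum>i<k. (if i = 0 then 1 else 0::real)^2) = (\<Sum>i<k. if i = 0 then 1 else 0)"
      by (rule sum.cong) auto
    have "(\<lambda>i. if i = 0 then 1 else 0::real) \<in> K" unfolding K_def using k e
      by (auto simp: PiE_def extensional_def)
    then show ?thesis by auto
  qed
  obtain f where fK: "f \<in> K" and fmax: "\<And>g. g \<in> K \<Longrightarrow> qf S k g \<le> qf S k f"
    using continuous_attains_sup[OF cK neK continuous_qf] by blast
  define \<mu> where "\<mu> = qf S k f"
  have f1: "(\<Sum>i<k. (f i)^2) = 1" using fK unfolding K_def by auto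
  have bound: "qf S k g \<le> \<mu> * (\<Sum>i<k. (g i)^2)" for g
  proof (cases "(\<Sum>i<k. (g i)^2) = 0")
    case True
    then have "\<And>i. i < k \<Longrightarrow> g i = 0" by (simp add: sum_nonneg_eq_0_iff)
    then have "qf S k g = qf S k (\<lambda>_. 0)" by (rule qf_cong)
    then show ?thesis using True by (simp add: qf_def)
  next
    case False
    define s where "s = (\<Sum>i<k. (g i)^2)"
    have s: "s > 0" using False unfolding s_def by (metis order_le_neq_trans sum_nonneg zero_le_power2)
    define h where "h i = (if i < k then g i / sqrt s else 0)" for i
    have hs: "(\<Sum>i<k. (h i)^2) = 1"
      using s unfolding h_def s_def[symmetric] by (simp add: power_divide sum_divide_distrib[symmetric] s_def)
    have hb: "h i \<in> {-1..1}" for i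
    proof (cases "i < k")
      case True
      have "(h i)^2 \<le> 1" using hs member_le_sum[of i "{..<k}" "\<lambda>i. (h i)^2"] True by auto
      then have "\<bar>h i\<bar> \<le> 1" by (simp add: abs_square_le_1)
      then show ?thesis by auto
    qed (auto simp: h_def)
    have "h \<in> K" unfolding K_def using hs hb by auto
    then have "qf S k h \<le> \<mu>" using fmax \<mu>_def by auto
    moreover have "qf S k h = (1 / sqrt s)^2 * qf S k g"
      by (subst qf_scale[symmetric], rule qf_cong) (auto simp: h_def)
    ultimately have "qf S k g / s \<le> \<mu>" using s by (simp add: power_divide)
    then show ?thesis using s unfolding s_def by (simp add: pos_divide_le_eq mult.commute)
  qed
  define Sf where "Sf i = (\<Sum>j<k. S $$ (i,j) * f j)" for i
  define y where "y i = Sf i - \<mu> * f i" for i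
  define Y where "Y = (\<Sum>i<k. (y i)^2)"
  define c where "c = \<mu> * Y - qf S k y"
  have c0: "c \<ge> 0" using bound[of y] unfolding c_def Y_def by simp
  have bfy: "bf S k y f = Y + \<mu> * (\<Sum>i<k. y i * f i)"
  proof -
    have "bf S k y f = (\<Sum>i<k. y i * Sf i)" unfolding bf_def Sf_def
      by (simp add: sum_distrib_left mult.assoc)
    also have "\<dots> = (\<Sum>i<k. (y i)^2 + \<mu> * (y i * f i))"
      by (intro sum.cong) (auto simp: y_def power2_eq_square algebra_simps)
    finally show ?thesis by (simp add: sum.distrib sum_distrib_left Y_def)
  qed
  have ineq: "2 * t * Y \<le> t^2 * c" for t
  proof -
    have "qf S k (\<lambda>i. f i + t * y i) \<le> \<mu> * (\<Sum>i<k. (f i + t * y i)^2)" by (rule bound)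
    also have "(\<Sum>i<k. (f i + t * y i)^2) = (\<Sum>i<k. (f i)^2) + 2 * t * (\<Sum>i<k. y i * f i) + t^2 * Y"
      by (simp add: Y_def power2_eq_square sum.distrib sum_distrib_left algebra_simps)
    finally have "qf S k (\<lambda>i. f i + t * y i) \<le> \<mu> * (1 + 2 * t * (\<Sum>i<k. y i * f i) + t^2 * Y)"
      using f1 by simp
    moreover have "qf S k (\<lambda>i. f i + t * y i) = qf S k f + 2 * t * bf S k y f + t^2 * qf S k y"
      by (rule qf_add[OF symS])
    ultimately show ?thesis
      unfolding bfy c_def \<mu>_def[symmetric]
      by (simp add: algebra_simps)
  qed
  have Y0: "Y = 0"
  proof (rule ccontr)
    assume "Y \<noteq> 0"
    then have Yp: "Y > 0" unfolding Y_def by (metis order_le_neq_trans sum_nonneg zero_le_power2)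
    define t where "t = Y / (c + 1)"
    have tp: "t > 0" using Yp c0 by (simp add: t_def)
    have "2 * t * Y \<le> t^2 * c" by (rule ineq)
    then have "2 * Y \<le> t * c" using tp by (simp add: power2_eq_square)
    also have "t * c < Y" using Yp c0 unfolding t_def by (simp add: field_simps)
    finally show False using Yp by simp
  qed
  then have y0: "\<And>i. i < k \<Longrightarrow> y i = 0" unfolding Y_def by (simp add: sum_nonneg_eq_0_iff)
  define u where "u = vec k f"
  have u: "u \<in> carrier_vec k" unfolding u_def by simp
  have un0: "u \<noteq> 0\<^sub>v k"
  proof
    assume "u = 0\<^sub>v k"
    then have "\<And>i. i < k \<Longrightarrow> f i = 0" unfolding u_def by (metis index_vec index_zero_vec(1))
    then show False using f1 by simp
  qed
  have eig: "S *\<^sub>v u = \<mu> \<cdot>\<^sub>v u"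
  proof (rule eq_vecI)
    fix i assume "i < dim_vec (\<mu> \<cdot>\<^sub>v u)"
    then have i: "i < k" using u by simp
    have "(S *\<^sub>v u) $ i = Sf i" using S i unfolding u_def Sf_def mult_mat_vec_def scalar_prod_def row_def
      by (auto simp: atLeast0LessThan intro!: sum.cong)
    also have "\<dots> = \<mu> * f i" using y0[OF i] unfolding y_def by simp
    finally show "(S *\<^sub>v u) $ i = (\<mu> \<cdot>\<^sub>v u) $ i" using i u_def by simp
  qed (use S u in auto)
  have "eigenvalue S \<mu>" unfolding eigenvalue_def eigenvector_def
    using S u un0 eig by auto
  moreover have "\<forall>x\<in>carrier_vec k. x \<bullet> (S *\<^sub>v x) \<le> \<mu> * (x \<bullet> x)"
    using bound qf_vec[OF S] sp_self by simp
  ultimately show ?thesis by blast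
qed


lemma sp_pos: assumes "(v :: real vec) \<in> carrier_vec k" "v \<noteq> 0\<^sub>v k" shows "v \<bullet> v > 0"
proof -
  obtain i where i: "i < k" "v $ i \<noteq> 0"
    using assms by (metis carrier_vecD eq_vecI index_zero_vec(1) index_zero_vec(2))
  have "0 < (v $ i)^2" using i by simp
  also have "\<dots> \<le> (\<Sum>i<k. (v $ i)^2)" using i by (intro member_le_sum) auto
  finally show ?thesis using sp_self[OF assms(1)] by simp
qed

lemma sp_ineq: assumes "(v :: real vec) \<in> carrier_vec k" "w \<in> carrier_vec k"
  shows "2 * (v \<bullet> w) \<le> v \<bullet> v + w \<bullet> w"
proof -
  have "2 * (v \<bullet> w) = (\<Sum>i<k. 2 * (v $ i * w $ i))"
    using assms unfolding scalar_prod_def by (simp add: atLeast0LessThan sum_distrib_left)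
  also have "\<dots> \<le> (\<Sum>i<k. (v $ i)^2 + (w $ i)^2)"
  proof (rule sum_mono)
    fix i
    have "0 \<le> (v $ i - w $ i)^2" by simp
    then show "2 * (v $ i * w $ i) \<le> (v $ i)^2 + (w $ i)^2" by (simp add: power2_eq_square algebra_simps)
  qed
  also have "\<dots> = v \<bullet> v + w \<bullet> w" using sp_self[OF assms(1)] sp_self[OF assms(2)] by (simp add: sum.distrib)
  finally show ?thesis .
qed

lemma lambda_max_prop:
  fixes S :: "real mat"
  assumes S: "S \<in> carrier_mat k k" and sym: "S\<^sup>T = S" and k: "k > 0"
  shows "eigenvalue S (lambda_max S)" "\<forall>x\<in>carrier_vec k. x \<bullet> (S *\<^sub>v x) \<le> lambda_max S * (x \<bullet> x)"
proof -
  obtain \<mu> where ev: "eigenvalue S \<mu>" and bd: "\<forall>x\<in>carrier_vec k. x \<bullet> (S *\<^sub>v x) \<le> \<mu> * (x \<bullet> x)"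
    using rayleigh_exists[OF assms] by blast
  have cp: "char_poly S \<noteq> 0" using degree_monic_char_poly[OF S] by auto
  have fin: "finite {e. eigenvalue S e}"
    using poly_roots_finite[OF cp] eigenvalue_root_char_poly[OF S] by simp
  have le: "e \<le> \<mu>" if ev': "eigenvalue S e" for e
  proof -
    obtain v where v: "v \<in> carrier_vec k" "v \<noteq> 0\<^sub>v k" "S *\<^sub>v v = e \<cdot>\<^sub>v v"
      using ev' S unfolding eigenvalue_def eigenvector_def by auto
    have "e * (v \<bullet> v) = v \<bullet> (S *\<^sub>v v)" using v by simp
    also have "\<dots> \<le> \<mu> * (v \<bullet> v)" using bd v by auto
    finally show ?thesis using sp_pos[OF v(1,2)] by simp
  qed
  have "lambda_max S = \<mu>" unfolding lambda_max_def
    by (rule Max_eqI[OF fin]) (use le ev in auto)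
  then show "eigenvalue S (lambda_max S)" "\<forall>x\<in>carrier_vec k. x \<bullet> (S *\<^sub>v x) \<le> lambda_max S * (x \<bullet> x)"
    using ev bd by auto
qed

definition pd :: "nat \<Rightarrow> real mat \<Rightarrow> bool" where
  "pd k A = (\<forall>x\<in>carrier_vec k. x \<noteq> 0\<^sub>v k \<longrightarrow> x \<bullet> (A *\<^sub>v x) > 0)"

lemma inv_mat_eq:
  assumes A: "A \<in> carrier_mat k k" and B: "B \<in> carrier_mat k k" and AB: "A * B = 1\<^sub>m k" and BA: "B * A = 1\<^sub>m k"
  shows "inv_mat A = B"
  unfolding inv_mat_def
proof (rule the_equality)
  show "B \<in> carrier_mat (dim_row A) (dim_row A) \<and> A * B = 1\<^sub>m (dim_row A) \<and> B * A = 1\<^sub>m (dim_row A)"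
    using assms by auto
  fix B' assume "B' \<in> carrier_mat (dim_row A) (dim_row A) \<and> A * B' = 1\<^sub>m (dim_row A) \<and> B' * A = 1\<^sub>m (dim_row A)"
  then have B': "B' \<in> carrier_mat k k" and B'A: "B' * A = 1\<^sub>m k" using A by auto
  have "B' = B' * (A * B)" using AB B' by simp
  also have "\<dots> = (B' * A) * B" using A B B' by simp
  also have "\<dots> = B" using B'A B by simp
  finally show "B' = B" .
qed

lemma pd_invertible:
  assumes A: "A \<in> carrier_mat k k" and pd: "pd k A"
  shows "\<exists>B\<in>carrier_mat k k. A * B = 1\<^sub>m k \<and> B * A = 1\<^sub>m k"
proof -
  have d: "det A \<noteq> 0"
  proof
    assume "det A = 0"
    then obtain v where v: "v \<in> carrier_vec k" "v \<noteq> 0\<^sub>v k" "A *\<^sub>v v = 0\<^sub>v k"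
      using det_0_iff_vec_prod_zero_field[OF A] by auto
    then show False using pd unfolding pd_def by fastforce
  qed
  define B where "B = (1 / det A) \<cdot>\<^sub>m adj_mat A"
  have B: "B \<in> carrier_mat k k" using adj_mat(1)[OF A] unfolding B_def by simp
  have "A * B = 1\<^sub>m k" unfolding B_def using adj_mat[OF A] d
    by (subst mult_smult_distrib[OF A adj_mat(1)[OF A]]) (auto intro!: eq_matI)
  moreover have "B * A = 1\<^sub>m k" unfolding B_def using adj_mat[OF A] d
    by (subst mult_smult_assoc_mat[OF adj_mat(1)[OF A] A]) (auto intro!: eq_matI)
  ultimately show ?thesis using B by blast
qed

lemma quad_congr:
  fixes A B :: "real mat"
  assumes A: "A \<in> carrier_mat k k" and B: "B \<in> carrier_mat k j" and x: "x \<in> carrier_vec j"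
  shows "x \<bullet> ((B\<^sup>T * A * B) *\<^sub>v x) = (B *\<^sub>v x) \<bullet> (A *\<^sub>v (B *\<^sub>v x))"
proof -
  have "(B\<^sup>T * A * B) *\<^sub>v x = (B\<^sup>T * A) *\<^sub>v (B *\<^sub>v x)"
    by (rule assoc_mult_mat_vec[of _ j k _ j]) (use A B x in auto)
  also have "\<dots> = B\<^sup>T *\<^sub>v (A *\<^sub>v (B *\<^sub>v x))"
    by (rule assoc_mult_mat_vec[of _ j k _ k]) (use A B x in auto)
  finally have "(B\<^sup>T * A * B) *\<^sub>v x = B\<^sup>T *\<^sub>v (A *\<^sub>v (B *\<^sub>v x))" .
  then have "x \<bullet> ((B\<^sup>T * A * B) *\<^sub>v x) = (B\<^sup>T *\<^sub>v (A *\<^sub>v (B *\<^sub>v x))) \<bullet> x"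
    using A B x by (simp add: comm_scalar_prod[of x j])
  also have "\<dots> = (A *\<^sub>v (B *\<^sub>v x)) \<bullet> (B *\<^sub>v x)"
    by (rule transpose_vec_mult_scalar[OF B x]) (use A B x in auto)
  also have "\<dots> = (B *\<^sub>v x) \<bullet> (A *\<^sub>v (B *\<^sub>v x))"
    using A B x by (simp add: comm_scalar_prod[of _ k])
  finally show ?thesis .
qed

lemma pd_congr:
  assumes A: "A \<in> carrier_mat k k" and pd: "pd k A" and B: "B \<in> carrier_mat k j"
    and inj: "\<And>x. x \<in> carrier_vec j \<Longrightarrow> B *\<^sub>v x = 0\<^sub>v k \<Longrightarrow> x = 0\<^sub>v j"
  shows "pd j (B\<^sup>T * A * B)"
  unfolding pd_def
proof (intro ballI impI)
  fix x :: "real vec" assume x: "x \<in> carrier_vec j" "x \<noteq> 0\<^sub>v j"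
  have "B *\<^sub>v x \<noteq> 0\<^sub>v k" using inj x by blast
  then have "(B *\<^sub>v x) \<bullet> (A *\<^sub>v (B *\<^sub>v x)) > 0" using pd B x unfolding pd_def by auto
  then show "x \<bullet> ((B\<^sup>T * A * B) *\<^sub>v x) > 0" using quad_congr[OF A B x(1)] by simp
qed

lemma sym_congr:
  fixes A B :: "real mat"
  assumes A: "A \<in> carrier_mat k k" and B: "B \<in> carrier_mat k j" and sym: "A\<^sup>T = A"
  shows "(B\<^sup>T * A * B)\<^sup>T = B\<^sup>T * A * B"
proof -
  have "(B\<^sup>T * A * B)\<^sup>T = B\<^sup>T * (B\<^sup>T * A)\<^sup>T"
    using A B by (subst transpose_mult[of "B\<^sup>T * A" j k B j]) auto
  also have "(B\<^sup>T * A)\<^sup>T = A\<^sup>T * B" using A B by (subst transpose_mult[of "B\<^sup>T" j k A k]) auto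
  finally show ?thesis using A B sym by simp
qed

lemma inv_sym:
  fixes A B :: "real mat"
  assumes A: "A \<in> carrier_mat k k" and B: "B \<in> carrier_mat k k" and AB: "A * B = 1\<^sub>m k" and BA: "B * A = 1\<^sub>m k"
    and sym: "A\<^sup>T = A"
  shows "B\<^sup>T = B"
proof -
  have "B\<^sup>T * A = 1\<^sub>m k" using transpose_mult[OF A B] AB sym by simp
  have "B\<^sup>T = B\<^sup>T * (A * B)" using AB B by simp
  also have "\<dots> = (B\<^sup>T * A) * B" by (rule assoc_mult_mat[symmetric]) (use A B in auto)
  also have "\<dots> = B" using \<open>B\<^sup>T * A = 1\<^sub>m k\<close> B by simp
  finally show ?thesis .
qed

lemma pinv_eq:
  fixes A B :: "real mat"
  assumes A: "A \<in> carrier_mat d m" and B: "B \<in> carrier_mat m d"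
    and c1: "A * B * A = A" and c2: "B * A * B = B" and c3: "(A * B)\<^sup>T = A * B" and c4: "(B * A)\<^sup>T = B * A"
  shows "pinv_mat A = B"
  unfolding pinv_mat_def
proof (rule the_equality)
  show "B \<in> carrier_mat (dim_col A) (dim_row A) \<and> A * B * A = A \<and> B * A * B = B \<and> (A * B)\<^sup>T = A * B \<and> (B * A)\<^sup>T = B * A"
    using assms by auto
  fix B' assume "B' \<in> carrier_mat (dim_col A) (dim_row A) \<and> A * B' * A = A \<and> B' * A * B' = B' \<and> (A * B')\<^sup>T = A * B' \<and> (B' * A)\<^sup>T = B' * A"
  then have B': "B' \<in> carrier_mat m d" and e1: "A * B' * A = A" and e2: "B' * A * B' = B'"
    and e3: "(A * B')\<^sup>T = A * B'" and e4: "(B' * A)\<^sup>T = B' * A" using A by auto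
  have AB: "A * B = A * B'"
  proof -
    have "A * B = (A * B)\<^sup>T" using c3 by simp
    also have "\<dots> = B\<^sup>T * A\<^sup>T" using transpose_mult[OF A B] .
    also have "A\<^sup>T = (A * B' * A)\<^sup>T" using e1 by simp
    also have "\<dots> = A\<^sup>T * (A * B')\<^sup>T" by (rule transpose_mult[of _ d d]) (use A B' in auto)
    also have "B\<^sup>T * (A\<^sup>T * (A * B')\<^sup>T) = (B\<^sup>T * A\<^sup>T) * (A * B')\<^sup>T"
      by (rule assoc_mult_mat[of "B\<^sup>T" d m "A\<^sup>T" d "(A*B')\<^sup>T" d, symmetric]) (use A B B' in auto)
    also have "B\<^sup>T * A\<^sup>T = (A * B)\<^sup>T" using transpose_mult[OF A B] by simp
    also have "(A * B)\<^sup>T * (A * B')\<^sup>T = (A * B) * (A * B')" using c3 e3 by simp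
    also have "\<dots> = (A * B * A) * B'"
      by (rule assoc_mult_mat[of "A*B" d d A m B' d, symmetric]) (use A B B' in auto)
    finally show ?thesis using c1 by simp
  qed
  have BA: "B * A = B' * A"
  proof -
    have "B * A = (B * A)\<^sup>T" using c4 by simp
    also have "\<dots> = A\<^sup>T * B\<^sup>T" using transpose_mult[OF B A] .
    also have "A\<^sup>T = (A * (B' * A))\<^sup>T"
      using e1 assoc_mult_mat[of A d m B' d A m] A B' by simp
    also have "\<dots> = (B' * A)\<^sup>T * A\<^sup>T" by (rule transpose_mult[of _ d m]) (use A B' in auto)
    also have "(B' * A)\<^sup>T * A\<^sup>T * B\<^sup>T = (B' * A)\<^sup>T * (A\<^sup>T * B\<^sup>T)"
      by (rule assoc_mult_mat[of "(B'*A)\<^sup>T" m m "A\<^sup>T" d "B\<^sup>T" m]) (use A B B' in auto)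
    also have "A\<^sup>T * B\<^sup>T = (B * A)\<^sup>T" using transpose_mult[OF B A] by simp
    also have "(B' * A)\<^sup>T * (B * A)\<^sup>T = (B' * A) * (B * A)" using c4 e4 by simp
    also have "\<dots> = B' * (A * (B * A))"
      by (rule assoc_mult_mat[of B' m d A m "B*A" m]) (use A B B' in auto)
    also have "A * (B * A) = A * B * A"
      by (rule assoc_mult_mat[of A d m B d A m, symmetric]) (use A B B' in auto)
    finally show ?thesis using c1 by simp
  qed
  have "B = B * A * B" using c2 by simp
  also have "\<dots> = B' * A * B" using BA by simp
  also have "\<dots> = B' * (A * B)" by (rule assoc_mult_mat[of B' m d A m B d]) (use A B B' in auto)
  also have "\<dots> = B' * (A * B')" using AB by simp
  also have "\<dots> = B' * A * B'" by (rule assoc_mult_mat[of B' m d A m B' d, symmetric]) (use A B B' in auto)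
  also have "\<dots> = B'" using e2 .
  finally show "B' = B" by simp
qed


lemma assoc_dim: "dim_col (A::real mat) = dim_row B \<Longrightarrow> dim_col B = dim_row C \<Longrightarrow> (A * B) * C = A * (B * C)"
  by (rule assoc_mult_mat[of A "dim_row A" "dim_col A" B "dim_col B" C "dim_col C"]) auto

lemma assoc_vec_dim: "dim_col (A::real mat) = dim_row B \<Longrightarrow> dim_col B = dim_vec v \<Longrightarrow> (A * B) *\<^sub>v v = A *\<^sub>v (B *\<^sub>v v)"
  by (rule assoc_mult_mat_vec[of A "dim_row A" "dim_col A" B "dim_col B"]) auto

lemma transpose_mult_dim: "dim_col (A::real mat) = dim_row B \<Longrightarrow> (A * B)\<^sup>T = B\<^sup>T * A\<^sup>T"
  by (rule transpose_mult[of A "dim_row A" "dim_col A" B "dim_col B"]) auto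

lemma psd_inv:
  assumes L: "L \<in> carrier_mat d d" and pdL: "pd d L" and Li: "Li \<in> carrier_mat d d" and LLi: "L * Li = 1\<^sub>m d"
    and y: "y \<in> carrier_vec d"
  shows "y \<bullet> (Li *\<^sub>v y) \<ge> 0"
proof -
  define z where "z = Li *\<^sub>v y"
  have z: "z \<in> carrier_vec d" using Li y z_def by simp
  have "L *\<^sub>v z = y" unfolding z_def using assoc_mult_mat_vec[OF L Li y, symmetric] LLi y by simp
  then have "y \<bullet> (Li *\<^sub>v y) = z \<bullet> (L *\<^sub>v z)" unfolding z_def[symmetric]
    using comm_scalar_prod[of y d z] y z by simp
  moreover have "z \<bullet> (L *\<^sub>v z) \<ge> 0"
  proof (cases "z = 0\<^sub>v d")
    case True then show ?thesis using L by simp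
  next
    case False then show ?thesis using pdL z unfolding pd_def by (simp add: less_imp_le)
  qed
  ultimately show ?thesis by simp
qed

lemma abstract_main:
  fixes R L W Wh Wmh :: "real mat"
  assumes R: "R \<in> carrier_mat d m" and L: "L \<in> carrier_mat d d" and W: "W \<in> carrier_mat m m"
    and Wh: "Wh \<in> carrier_mat m m" and Wmh: "Wmh \<in> carrier_mat m m"
    and WhWh: "Wh * Wh = W" and WmhWh: "Wmh * Wh = 1\<^sub>m m"
    and Wh_sym: "Wh\<^sup>T = Wh" and Wmh_sym: "Wmh\<^sup>T = Wmh" and W_sym: "W\<^sup>T = W"
    and pdW: "pd m W" and pdL: "pd d L" and L_sym: "L\<^sup>T = L"
    and Rinj: "\<And>x. x \<in> carrier_vec d \<Longrightarrow> R\<^sup>T *\<^sub>v x = 0\<^sub>v m \<Longrightarrow> x = 0\<^sub>v d"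
    and m: "m > 0"
  shows "lambda_max (Wmh * pinv_mat R * inv_mat L * (pinv_mat R)\<^sup>T * Wmh)
       \<ge> lambda_max (Wh * R\<^sup>T * inv_mat (R * W * R\<^sup>T * L * R * W * R\<^sup>T) * R * Wh)"
proof -
  have RT: "R\<^sup>T \<in> carrier_mat m d" using R by simp
  define M where "M = R * W * R\<^sup>T"
  have M: "M \<in> carrier_mat d d" using R W unfolding M_def by simp
  have pdM: "pd d M" using pd_congr[OF W pdW RT Rinj] unfolding M_def by simp
  have M_sym: "M\<^sup>T = M" using sym_congr[OF W RT W_sym] unfolding M_def by simp
  obtain Mi where Mi: "Mi \<in> carrier_mat d d" and MMi: "M * Mi = 1\<^sub>m d" and MiM: "Mi * M = 1\<^sub>m d"
    using pd_invertible[OF M pdM] by blast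
  have Mi_sym: "Mi\<^sup>T = Mi" using inv_sym[OF M Mi MMi MiM M_sym] .
  obtain Li where Li: "Li \<in> carrier_mat d d" and LLi: "L * Li = 1\<^sub>m d" and LiL: "Li * L = 1\<^sub>m d"
    using pd_invertible[OF L pdL] by blast
  have Li_sym: "Li\<^sup>T = Li" using inv_sym[OF L Li LLi LiL L_sym] .
  have pdI: "pd m (1\<^sub>m m)" unfolding pd_def using sp_pos by auto
  have pdRR: "pd d (R * R\<^sup>T)" using pd_congr[OF one_carrier_mat pdI RT Rinj] R by simp
  obtain P where P: "P \<in> carrier_mat d d" and RRP: "R * R\<^sup>T * P = 1\<^sub>m d" and PRR: "P * (R * R\<^sup>T) = 1\<^sub>m d"
    using pd_invertible[OF _ pdRR] R by auto
  have P_sym: "P\<^sup>T = P" using inv_sym[OF _ P RRP PRR] R by (simp add: transpose_mult_dim)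
  note dims = carrier_matD[OF R] carrier_matD[OF L] carrier_matD[OF W] carrier_matD[OF Wh]
    carrier_matD[OF Wmh] carrier_matD[OF M] carrier_matD[OF Mi] carrier_matD[OF Li] carrier_matD[OF P]
  note AS = assoc_dim assoc_vec_dim transpose_mult_dim dims
  have RRP': "R * (R\<^sup>T * P) = 1\<^sub>m d" using RRP by (simp add: AS)
  have pinv: "pinv_mat R = R\<^sup>T * P"
  proof (rule pinv_eq[OF R])
    show "R\<^sup>T * P \<in> carrier_mat m d" using R P by simp
    show "R * (R\<^sup>T * P) * R = R" using RRP' R by simp
    show "R\<^sup>T * P * R * (R\<^sup>T * P) = R\<^sup>T * P" using RRP' by (simp add: AS)
    show "(R * (R\<^sup>T * P))\<^sup>T = R * (R\<^sup>T * P)" using RRP' by simp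
    show "(R\<^sup>T * P * R)\<^sup>T = R\<^sup>T * P * R" using sym_congr[OF P R P_sym] by simp
  qed
  have invL: "inv_mat L = Li" by (rule inv_mat_eq[OF L Li LLi LiL])
  have Z: "R * W * R\<^sup>T * L * R * W * R\<^sup>T = M * L * M" unfolding M_def by (simp add: AS)
  have MMi': "R * (W * (R\<^sup>T * Mi)) = 1\<^sub>m d" using MMi unfolding M_def by (simp add: AS)
  have MMi'': "R * (W * (R\<^sup>T * (Mi * X))) = X" if "dim_row X = d" for X
  proof -
    have "R * (W * (R\<^sup>T * (Mi * X))) = (R * (W * (R\<^sup>T * Mi))) * X" using that by (simp add: AS)
    then show ?thesis using MMi' that by simp
  qed
  have MiM': "Mi * (R * (W * R\<^sup>T)) = 1\<^sub>m d" using MiM unfolding M_def by (simp add: AS)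
  have MiM'': "Mi * (R * (W * (R\<^sup>T * X))) = X" if "dim_row X = d" for X
  proof -
    have "Mi * (R * (W * (R\<^sup>T * X))) = (Mi * (R * (W * R\<^sup>T))) * X" using that by (simp add: AS)
    then show ?thesis using MiM' that by simp
  qed
  have LLi'': "L * (Li * X) = X" if "dim_row X = d" for X
    using LLi that assoc_dim[of L Li X] dims by simp
  have LiL'': "Li * (L * X) = X" if "dim_row X = d" for X
    using LiL that assoc_dim[of Li L X] dims by simp
  have invZ: "inv_mat (R * W * R\<^sup>T * L * R * W * R\<^sup>T) = Mi * Li * Mi"
    unfolding Z
  proof (rule inv_mat_eq)
    show "M * L * M \<in> carrier_mat d d" "Mi * Li * Mi \<in> carrier_mat d d" using M L Mi Li by auto
    show "M * L * M * (Mi * Li * Mi) = 1\<^sub>m d" unfolding M_def by (simp add: AS MMi'' LLi'' MMi')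
    show "Mi * Li * Mi * (M * L * M) = 1\<^sub>m d" unfolding M_def by (simp add: AS MiM'' LiL'' MiM')
  qed
  define G where "G = Mi * R * Wh"
  define H where "H = P * R * Wmh"
  have G: "G \<in> carrier_mat d m" and H: "H \<in> carrier_mat d m" unfolding G_def H_def using Mi P R Wh Wmh by auto
  define X where "X = Wh * R\<^sup>T * inv_mat (R * W * R\<^sup>T * L * R * W * R\<^sup>T) * R * Wh"
  define X1 where "X1 = Wmh * pinv_mat R * inv_mat L * (pinv_mat R)\<^sup>T * Wmh"
  have XG: "X = G\<^sup>T * Li * G" unfolding X_def invZ G_def
    by (simp add: AS Mi_sym Wh_sym)
  have XH: "X1 = H\<^sup>T * Li * H" unfolding X1_def pinv invL H_def
    by (simp add: AS P_sym Wmh_sym)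
  have Xc: "X \<in> carrier_mat m m" unfolding XG using G Li by simp
  have X1c: "X1 \<in> carrier_mat m m" unfolding XH using H Li by simp
  have Xs: "X\<^sup>T = X" unfolding XG by (rule sym_congr[OF Li G Li_sym])
  have X1s: "X1\<^sup>T = X1" unfolding XH by (rule sym_congr[OF Li H Li_sym])
  note lm = lambda_max_prop[OF Xc Xs m]
  note lm1 = lambda_max_prop[OF X1c X1s m]
  define lam where "lam = lambda_max X"
  define lam1 where "lam1 = lambda_max X1"
  obtain v where v: "v \<in> carrier_vec m" "v \<noteq> 0\<^sub>v m" "X *\<^sub>v v = lam \<cdot>\<^sub>v v"
    using lm(1) Xc unfolding eigenvalue_def eigenvector_def lam_def by auto
  obtain u where u: "u \<in> carrier_vec m" "u \<noteq> 0\<^sub>v m" "X1 *\<^sub>v u = lam1 \<cdot>\<^sub>v u"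
    using lm1(1) X1c unfolding eigenvalue_def eigenvector_def lam1_def by auto
  have lam1_nn: "lam1 \<ge> 0"
  proof -
    have "lam1 * (u \<bullet> u) = u \<bullet> (X1 *\<^sub>v u)" using u by simp
    also have "\<dots> = (H *\<^sub>v u) \<bullet> (Li *\<^sub>v (H *\<^sub>v u))" unfolding XH by (rule quad_congr[OF Li H u(1)])
    also have "\<dots> \<ge> 0" by (rule psd_inv[OF L pdL Li LLi]) (use H u in simp)
    finally show ?thesis using sp_pos[OF u(1,2)] by (simp add: zero_le_mult_iff)
  qed
  define z where "z = G *\<^sub>v v"
  have z: "z \<in> carrier_vec d" unfolding z_def using G v by simp
  have zv: "z = Mi *\<^sub>v (R *\<^sub>v (Wh *\<^sub>v v))" unfolding z_def G_def using v by (simp add: AS)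
  define y where "y = R\<^sup>T *\<^sub>v z"
  have y: "y \<in> carrier_vec m" unfolding y_def using R z by simp
  define w where "w = Wh *\<^sub>v y"
  have w: "w \<in> carrier_vec m" unfolding w_def using Wh y by simp
  have Hw: "H *\<^sub>v w = z"
  proof -
    have "H *\<^sub>v w = P *\<^sub>v (R *\<^sub>v (Wmh *\<^sub>v (Wh *\<^sub>v y)))" unfolding H_def w_def using y by (simp add: AS)
    also have "Wmh *\<^sub>v (Wh *\<^sub>v y) = y" using WmhWh y assoc_vec_dim[of Wmh Wh y] dims by simp
    also have "P *\<^sub>v (R *\<^sub>v y) = (P * (R * R\<^sup>T)) *\<^sub>v z" unfolding y_def using z by (simp add: AS)
    also have "\<dots> = z" using PRR z by simp
    finally show ?thesis .
  qed
  have lamv: "lam * (v \<bullet> v) = z \<bullet> (Li *\<^sub>v z)"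
  proof -
    have "lam * (v \<bullet> v) = v \<bullet> (X *\<^sub>v v)" using v by simp
    also have "\<dots> = z \<bullet> (Li *\<^sub>v z)" unfolding XG z_def by (rule quad_congr[OF Li G v(1)])
    finally show ?thesis .
  qed
  have lamw: "w \<bullet> (X1 *\<^sub>v w) = z \<bullet> (Li *\<^sub>v z)"
    unfolding XH quad_congr[OF Li H w] Hw ..
  have ww: "w \<bullet> w = (R *\<^sub>v (Wh *\<^sub>v v)) \<bullet> z"
  proof -
    have "w \<bullet> w = (Wh\<^sup>T *\<^sub>v w) \<bullet> y" unfolding w_def
      by (rule transpose_vec_mult_scalar[OF Wh y, symmetric]) (use Wh y in simp)
    also have "Wh\<^sup>T *\<^sub>v w = W *\<^sub>v y" unfolding w_def Wh_sym using WhWh y assoc_vec_dim[of Wh Wh y] dims by simp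
    also have "(W *\<^sub>v y) \<bullet> y = ((R\<^sup>T)\<^sup>T *\<^sub>v (W *\<^sub>v y)) \<bullet> z" unfolding y_def
      by (rule transpose_vec_mult_scalar[OF RT z, symmetric]) (use W y y_def in simp)
    also have "(R\<^sup>T)\<^sup>T *\<^sub>v (W *\<^sub>v y) = M *\<^sub>v z" unfolding M_def y_def using z by (simp add: AS)
    also have "M *\<^sub>v z = R *\<^sub>v (Wh *\<^sub>v v)" unfolding zv
      using v MMi assoc_vec_dim[of M Mi "R *\<^sub>v (Wh *\<^sub>v v)"] dims
        one_mult_mat_vec[of "R *\<^sub>v (Wh *\<^sub>v v)" d] R Wh by simp
    finally show ?thesis .
  qed
  have vw: "v \<bullet> w = (R *\<^sub>v (Wh *\<^sub>v v)) \<bullet> z"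
  proof -
    have "v \<bullet> w = (Wh\<^sup>T *\<^sub>v v) \<bullet> y" unfolding w_def
      by (rule transpose_vec_mult_scalar[OF Wh y, symmetric]) (use v in simp)
    also have "\<dots> = ((R\<^sup>T)\<^sup>T *\<^sub>v (Wh *\<^sub>v v)) \<bullet> z" unfolding y_def Wh_sym
      by (rule transpose_vec_mult_scalar[OF RT z, symmetric]) (use Wh v in simp)
    finally show ?thesis by simp
  qed
  have wv: "w \<bullet> w \<le> v \<bullet> v" using sp_ineq[OF v(1) w] ww vw by simp
  have "lam * (v \<bullet> v) = w \<bullet> (X1 *\<^sub>v w)" using lamv lamw by simp
  also have "\<dots> \<le> lam1 * (w \<bullet> w)" using lm1(2) w lam1_def by simp
  also have "\<dots> \<le> lam1 * (v \<bullet> v)" using wv lam1_nn by (simp add: mult_left_mono)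
  finally have "lam \<le> lam1" using sp_pos[OF v(1,2)] by simp
  then show ?thesis unfolding lam_def lam1_def X_def X1_def .
qed

lemma D_entry:
  assumes "i < n" "l < n - 1" "n - 1 \<le> length es" "fst (es ! l) \<noteq> snd (es ! l)"
  shows "D_tree n es $$ (i, l) = (if i = fst (es ! l) then 1 else 0) - (if i = snd (es ! l) then 1 else 0)"
  using assms unfolding D_tree_def incidence_mat_def by auto

lemma tree_path:
  assumes tree: "first_edges_spanning_tree n es" and vg: "valid_graph n es"
    and a: "a < n" and p: "(a, j) \<in> (adj_rel (take (n - 1) es))\<^sup>*"
  shows "\<exists>f. \<forall>i<n. (\<Sum>l<n-1. D_tree n es $$ (i, l) * f l) = (if i = j then 1 else 0) - (if i = a then 1 else 0)"
  using p
proof (induction rule: rtrancl_induct)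
  case base
  show ?case by (rule exI[of _ "\<lambda>_. 0"]) simp
next
  case (step k j)
  from step.IH obtain f where f: "\<And>i. i < n \<Longrightarrow> (\<Sum>l<n-1. D_tree n es $$ (i, l) * f l) = (if i = k then 1 else 0) - (if i = a then 1 else 0)"
    by blast
  have len: "n - 1 \<le> length es" using tree unfolding first_edges_spanning_tree_def by simp
  have lt: "length (take (n - 1) es) = n - 1" using len by simp
  have sumd: "(\<Sum>l'<n-1. D_tree n es $$ (i, l') * (f l' + c * (if l' = l then 1 else 0)))
      = (\<Sum>l'<n-1. D_tree n es $$ (i, l') * f l') + c * D_tree n es $$ (i, l)" if "l < n - 1" for i l c
  proof -
    have e: "(\<lambda>l'. D_tree n es $$ (i, l') * (f l' + c * (if l' = l then 1 else 0)))
       = (\<lambda>l'. D_tree n es $$ (i, l') * f l' + (if l' = l then c * D_tree n es $$ (i, l) else 0))"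
      by (auto simp: algebra_simps)
    show ?thesis unfolding e sum.distrib using that by simp
  qed
  from step.hyps(2) have "(k, j) \<in> set (take (n - 1) es) \<or> (j, k) \<in> set (take (n - 1) es)"
    unfolding adj_rel_def by auto
  then show ?case
  proof
    assume "(k, j) \<in> set (take (n - 1) es)"
    then obtain l where l: "l < n - 1" and el: "es ! l = (k, j)"
      using lt by (auto simp: in_set_conv_nth)
    have "es ! l \<in> set es" using l len by simp
    then have kj: "k \<noteq> j" using vg el unfolding valid_graph_def by force
    show ?case
    proof (rule exI[of _ "\<lambda>l'. f l' + (-1) * (if l' = l then 1 else 0)"], intro allI impI)
      fix i assume i: "i < n"
      show "(\<Sum>l'<n-1. D_tree n es $$ (i, l') * (f l' + (-1) * (if l' = l then 1 else 0))) = (if i = j then 1 else 0) - (if i = a then 1 else 0)"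
        unfolding sumd[OF l] f[OF i] using D_entry[OF i l len] el kj by auto
    qed
  next
    assume "(j, k) \<in> set (take (n - 1) es)"
    then obtain l where l: "l < n - 1" and el: "es ! l = (j, k)"
      using lt by (auto simp: in_set_conv_nth)
    have "es ! l \<in> set es" using l len by simp
    then have kj: "k \<noteq> j" using vg el unfolding valid_graph_def by force
    show ?case
    proof (rule exI[of _ "\<lambda>l'. f l' + 1 * (if l' = l then 1 else 0)"], intro allI impI)
      fix i assume i: "i < n"
      show "(\<Sum>l'<n-1. D_tree n es $$ (i, l') * (f l' + 1 * (if l' = l then 1 else 0))) = (if i = j then 1 else 0) - (if i = a then 1 else 0)"
        unfolding sumd[OF l] f[OF i] using D_entry[OF i l len] el kj by auto
    qed
  qed
qed


lemma D_inj:
  assumes n: "n \<ge> 2" and tree: "first_edges_spanning_tree n es" and vg: "valid_graph n es"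
    and x: "x \<in> carrier_vec (n - 1)" and Dx: "D_tree n es *\<^sub>v x = 0\<^sub>v n"
  shows "x = 0\<^sub>v (n - 1)"
proof -
  define d where "d = n - 1"
  define D where "D = D_tree n es"
  have D: "D \<in> carrier_mat n d" unfolding D_def d_def D_tree_def by simp
  have conn: "\<And>i j. i < n \<Longrightarrow> j < n \<Longrightarrow> (i, j) \<in> (adj_rel (take (n - 1) es))\<^sup>*"
    using tree unfolding first_edges_spanning_tree_def graph_connected_def by blast
  have "\<forall>c. \<exists>f. c < d \<longrightarrow> (\<forall>i<n. (\<Sum>l<d. D $$ (i, l) * f l) = (if i = c then 1 else 0) - (if i = d then 1 else 0))"
  proof
    fix c
    show "\<exists>f. c < d \<longrightarrow> (\<forall>i<n. (\<Sum>l<d. D $$ (i, l) * f l) = (if i = c then 1 else 0) - (if i = d then 1 else 0))"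
    proof (cases "c < d")
      case True
      have "d < n" "c < n" using n True unfolding d_def by auto
      from tree_path[OF tree vg \<open>d < n\<close> conn[OF \<open>d < n\<close> \<open>c < n\<close>]] show ?thesis
        unfolding D_def d_def by blast
    qed auto
  qed
  from choice[OF this] obtain F where F: "\<And>c i. c < d \<Longrightarrow> i < n \<Longrightarrow>
      (\<Sum>l<d. D $$ (i, l) * F c l) = (if i = c then 1 else 0) - (if i = d then 1 else 0)"
    by blast
  define DS where "DS = mat d d (\<lambda>(r, c). D $$ (r, c))"
  define B where "B = mat d d (\<lambda>(r, c). F c r)"
  have DS: "DS \<in> carrier_mat d d" and B: "B \<in> carrier_mat d d" unfolding DS_def B_def by auto
  have DSB: "DS * B = 1\<^sub>m d"
  proof (rule eq_matI)
    fix r c assume rc: "r < dim_row (1\<^sub>m d)" "c < dim_col (1\<^sub>m d)"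
    then have r: "r < d" and c: "c < d" by auto
    have rn: "r < n" using r n unfolding d_def by simp
    have "(DS * B) $$ (r, c) = (\<Sum>l<d. D $$ (r, l) * F c l)"
      using r c unfolding DS_def B_def by (simp add: scalar_prod_def atLeast0LessThan)
    also have "\<dots> = (if r = c then 1 else 0)" using F[OF c rn] r by simp
    finally show "(DS * B) $$ (r, c) = 1\<^sub>m d $$ (r, c)" using r c by simp
  qed (use DS B in auto)
  have BDS: "B * DS = 1\<^sub>m d" by (rule mat_mult_left_right_inverse[OF DS B DSB])
  have DSx: "DS *\<^sub>v x = 0\<^sub>v d"
  proof (rule eq_vecI)
    fix r assume "r < dim_vec (0\<^sub>v d)"
    then have r: "r < d" by simp
    then have rn: "r < n" using n unfolding d_def by simp
    have "(DS *\<^sub>v x) $ r = (D *\<^sub>v x) $ r"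
      using r rn x D unfolding DS_def d_def by (simp add: scalar_prod_def row_def)
    then show "(DS *\<^sub>v x) $ r = 0\<^sub>v d $ r" using Dx rn r unfolding D_def by simp
  qed (use DS in auto)
  have "x = (B * DS) *\<^sub>v x" using BDS x unfolding d_def by simp
  also have "\<dots> = B *\<^sub>v (DS *\<^sub>v x)" using B DS x unfolding d_def by simp
  also have "\<dots> = 0\<^sub>v d" unfolding DSx using B by (auto intro!: eq_vecI simp: scalar_prod_def)
  finally show ?thesis unfolding d_def .
qed


lemma diag_carrier[simp]: "diag_of k a \<in> carrier_mat k k"
  unfolding diag_of_def by simp

lemma diag_mult: "diag_of k a * diag_of k b = diag_of k (\<lambda>i. a i * b i)"
proof (rule eq_matI)
  fix i j assume ij: "i < dim_row (diag_of k (\<lambda>i. a i * b i))" "j < dim_col (diag_of k (\<lambda>i. a i * b i))"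
  then have i: "i < k" and j: "j < k" unfolding diag_of_def by auto
  have e: "(\<lambda>l. row (diag_of k a) i $ l * col (diag_of k b) j $ l)
     = (\<lambda>l. if l < k then (if l = i then (if i = j then a i * b i else 0) else 0) else row (diag_of k a) i $ l * col (diag_of k b) j $ l)"
    using i j unfolding diag_of_def by (auto simp: row_def col_def)
  have "(diag_of k a * diag_of k b) $$ (i, j) = (\<Sum>l\<in>{0..<k}. (if i = l then a i else 0) * (if l = j then b l else 0))"
    using i j by (simp add: diag_of_def scalar_prod_def)
  also have "\<dots> = (\<Sum>l\<in>{0..<k}. (if l = i then (if i = j then a i * b i else 0) else 0))"
    by (rule sum.cong) auto
  also have "\<dots> = (if i = j then a i * b i else 0)" using i by simp
  finally show "(diag_of k a * diag_of k b) $$ (i, j) = diag_of k (\<lambda>i. a i * b i) $$ (i, j)"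
    using i j unfolding diag_of_def by simp
qed (auto simp: diag_of_def)

lemma diag_transpose: "(diag_of k a)\<^sup>T = diag_of k a"
  by (rule eq_matI) (auto simp: diag_of_def)

lemma diag_cong: "(\<And>i. i < k \<Longrightarrow> a i = b i) \<Longrightarrow> diag_of k a = diag_of k b"
  by (rule eq_matI) (auto simp: diag_of_def)

lemma diag_one: "diag_of k (\<lambda>_. 1) = 1\<^sub>m k"
  by (rule eq_matI) (auto simp: diag_of_def)

lemma diag_pd: assumes "\<And>i. i < k \<Longrightarrow> a i > 0" shows "pd k (diag_of k a)"
  unfolding pd_def
proof (intro ballI impI)
  fix x :: "real vec" assume x: "x \<in> carrier_vec k" "x \<noteq> 0\<^sub>v k"
  obtain i where i: "i < k" "x $ i \<noteq> 0"
    using x by (metis carrier_vecD eq_vecI index_zero_vec(1) index_zero_vec(2))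
  have dv: "diag_of k a *\<^sub>v x = vec k (\<lambda>i. a i * x $ i)"
  proof (rule eq_vecI)
    fix j assume "j < dim_vec (vec k (\<lambda>i. a i * x $ i))"
    then have j: "j < k" by simp
    have e: "(\<lambda>l. row (diag_of k a) j $ l * x $ l) = (\<lambda>l. if l < k then (if l = j then a j * x $ j else 0) else row (diag_of k a) j $ l * x $ l)"
      using j unfolding diag_of_def by (auto simp: row_def)
    have "(diag_of k a *\<^sub>v x) $ j = (\<Sum>l\<in>{0..<k}. (if j = l then a j else 0) * x $ l)"
      using j x by (simp add: diag_of_def scalar_prod_def)
    also have "\<dots> = (\<Sum>l\<in>{0..<k}. if l = j then a j * x $ j else 0)" by (rule sum.cong) auto
    finally show "(diag_of k a *\<^sub>v x) $ j = vec k (\<lambda>i. a i * x $ i) $ j" using j by simp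
  qed (simp add: diag_of_def)
  have "x \<bullet> (diag_of k a *\<^sub>v x) = (\<Sum>l\<in>{0..<k}. a l * (x $ l)^2)"
    unfolding dv scalar_prod_def by (auto intro!: sum.cong simp: power2_eq_square)
  also have "\<dots> \<ge> a i * (x $ i)^2"
    by (rule member_le_sum) (use i in \<open>auto intro!: mult_nonneg_nonneg less_imp_le[OF assms]\<close>)
  moreover have "a i * (x $ i)^2 > 0" using i assms by simp
  ultimately show "x \<bullet> (diag_of k a *\<^sub>v x) > 0" by linarith
qed

lemma R_carrier: "R_mat n es \<in> carrier_mat (n - 1) (length es)"
  unfolding R_mat_def by simp

lemma R_inj:
  assumes dm: "n - 1 \<le> length es" and x: "x \<in> carrier_vec (n - 1)" and Rx: "(R_mat n es)\<^sup>T *\<^sub>v x = 0\<^sub>v (length es)"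
  shows "x = 0\<^sub>v (n - 1)"
proof (rule eq_vecI)
  fix j assume "j < dim_vec (0\<^sub>v (n - 1))"
  then have j: "j < n - 1" by simp
  have jm: "j < length es" using j dm by simp
  have "((R_mat n es)\<^sup>T *\<^sub>v x) $ j = (\<Sum>i\<in>{0..<n-1}. (if i = j then 1 else 0) * x $ i)"
    using j jm x unfolding R_mat_def by (simp add: scalar_prod_def row_def col_def)
  also have "\<dots> = (\<Sum>i\<in>{0..<n-1}. if i = j then x $ i else 0)" by (rule sum.cong) auto
  also have "\<dots> = x $ j" using j by simp
  finally show "x $ j = 0\<^sub>v (n - 1) $ j" using Rx jm j by simp
qed (use x in auto)


theorem lemma8:
  fixes n :: nat and es :: "(nat \<times> nat) list" and w eps :: "nat \<Rightarrow> real"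
  assumes "n \<ge> 2"
    and "valid_graph n es"
    and "first_edges_spanning_tree n es"
    and "\<And>l. l < length es \<Longrightarrow> w l > 0"
    and "\<And>i. i < n \<Longrightarrow> eps i > 0"
  shows "let m = length es; R = R_mat n es; L = L_es_tau n es eps;
             W = diag_of m w;
             Wh = diag_of m (\<lambda>l. sqrt (w l));
             Wmh = diag_of m (\<lambda>l. 1 / sqrt (w l));
             X = Wh * R\<^sup>T * inv_mat (R * W * R\<^sup>T * L * R * W * R\<^sup>T) * R * Wh;
             X1 = Wmh * pinv_mat R * inv_mat L * (pinv_mat R)\<^sup>T * Wmh
         in lambda_max X1 \<ge> lambda_max X"
proof -
  note n = assms(1) and vg = assms(2) and tree = assms(3) and wpos = assms(4) and epos = assms(5)
  define m where "m = length es"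
  define d where "d = n - 1"
  have dm: "n - 1 \<le> length es" using tree unfolding first_edges_spanning_tree_def by simp
  have m0: "m > 0" using dm n unfolding m_def by linarith
  define D where "D = D_tree n es"
  have D: "D \<in> carrier_mat n d" unfolding D_def d_def D_tree_def by simp
  define E where "E = diag_of n (\<lambda>i. 1 / eps i)"
  have E: "E \<in> carrier_mat n n" unfolding E_def by simp
  have pdE: "pd n E" unfolding E_def by (rule diag_pd) (use epos in simp)
  have L: "L_es_tau n es eps = D\<^sup>T * E * D" unfolding L_es_tau_def D_def E_def ..
  have Dinj: "\<And>x. x \<in> carrier_vec d \<Longrightarrow> D *\<^sub>v x = 0\<^sub>v n \<Longrightarrow> x = 0\<^sub>v d"
    using D_inj[OF n tree vg] unfolding D_def d_def by blast
  have pdL: "pd d (L_es_tau n es eps)" unfolding L by (rule pd_congr[OF E pdE D Dinj])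
  have Lsym: "(L_es_tau n es eps)\<^sup>T = L_es_tau n es eps" unfolding L
    by (rule sym_congr[OF E D]) (simp add: E_def diag_transpose)
  have Lc: "L_es_tau n es eps \<in> carrier_mat d d" unfolding L using D E by simp
  have WhWh: "diag_of m (\<lambda>l. sqrt (w l)) * diag_of m (\<lambda>l. sqrt (w l)) = diag_of m w"
    unfolding diag_mult by (rule diag_cong) (use wpos in \<open>simp add: m_def less_imp_le\<close>)
  have WmhWh: "diag_of m (\<lambda>l. 1 / sqrt (w l)) * diag_of m (\<lambda>l. sqrt (w l)) = 1\<^sub>m m"
    unfolding diag_mult diag_one[symmetric] by (rule diag_cong) (use wpos in \<open>force simp: m_def\<close>)
  have pdW: "pd m (diag_of m w)" by (rule diag_pd) (use wpos in \<open>simp add: m_def\<close>)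
  have Rc: "R_mat n es \<in> carrier_mat d m" using R_carrier unfolding d_def m_def .
  have Rinj: "\<And>x. x \<in> carrier_vec d \<Longrightarrow> (R_mat n es)\<^sup>T *\<^sub>v x = 0\<^sub>v m \<Longrightarrow> x = 0\<^sub>v d"
    using R_inj[OF dm] unfolding d_def m_def by blast
  show ?thesis unfolding Let_def m_def[symmetric]
    by (rule abstract_main[OF Rc Lc diag_carrier diag_carrier diag_carrier WhWh WmhWh
          diag_transpose diag_transpose diag_transpose pdW pdL Lsym Rinj m0])
qed

end
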